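(* Let $b\ge2$ be an integer, $\lambda\in(1/b,1)$, and let $\phi$ be a real analytic $\mathbb{Z}$-periodic function satisfying condition (H). Then there exist $\varepsilon_1>0$ and a positive integer $Q_1$ such that for every $f\in\mathcal{F}_1$: $\sup_{x\in[0,1]}|f'(x)|\ge\varepsilon_1$, and for every $x\in[0,1]$ there exists $k\in\{1,\dots,Q_1\}$ with $|f^{(k)}(x)|\ge\varepsilon_1$.
   Context: $\Sigma=\{0,\dots,b-1\}^{\mathbb{Z}_+}$, $\gamma=1/(b\lambda)$, $Y(x,\mathbf{j})=-\sum_{n\ge1}\gamma^n\phi'\!\left(\frac{x}{b^n}+\frac{j_1}{b^n}+\cdots+\frac{j_n}{b}\right)$, $\Gamma_{\mathbf{j}}(x)=\int_0^xY(t,\mathbf{j})dt$. Condition (H): $Y(\cdot,\mathbf{j})-Y(\cdot,\mathbf{i})\not\equiv0$ for all $\mathbf{i}\ne\mathbf{j}$. For $n\in\mathbb{Z}_+$, $\mathcal{F}_n=\{\Gamma_{\mathbf{u}}-\Gamma_{\mathbf{v}}:\mathbf{u},\mathbf{v}\in\Sigma,\ u_n\ne v_n,\ u_j=v_j\text{ for }1\le j<n\}$. *)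

theory Defs
  imports "HOL-Analysis.Analysis"
begin

definition real_analytic :: "(real \<Rightarrow> real) \<Rightarrow> bool" where
  "real_analytic \<phi> \<longleftrightarrow>
     (\<forall>x0. \<exists>r>0. \<exists>a::nat \<Rightarrow> real. \<forall>x. \<bar>x - x0\<bar> < r \<longrightarrow> (\<lambda>n. a n * (x - x0) ^ n) sums \<phi> x)"

text \<open>Symbol space: sequences j_1, j_2, ... with digits in {0..b-1}; the unused
  entry at index 0 is normalised to 0 so that elements correspond exactly to
  sequences indexed by the positive integers.\<close>
definition SigmaSp :: "nat \<Rightarrow> (nat \<Rightarrow> nat) set" where
  "SigmaSp b = {j. j 0 = 0 \<and> (\<forall>n\<ge>1. j n < b)}"

definition Yfun :: "nat \<Rightarrow> real \<Rightarrow> (real \<Rightarrow> real) \<Rightarrow> real \<Rightarrow> (nat \<Rightarrow> nat) \<Rightarrow> real" where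
  "Yfun b lam \<phi> x j =
     - (\<Sum>m. let n = Suc m in
          (1 / (real b * lam)) ^ n *
          deriv \<phi> (x / real b ^ n + (\<Sum>k=1..n. real (j k) / real b ^ (n - k + 1))))"

definition Gammafun :: "nat \<Rightarrow> real \<Rightarrow> (real \<Rightarrow> real) \<Rightarrow> (nat \<Rightarrow> nat) \<Rightarrow> real \<Rightarrow> real" where
  "Gammafun b lam \<phi> j x =
     (if 0 \<le> x then integral {0..x} (\<lambda>t. Yfun b lam \<phi> t j)
      else - integral {x..0} (\<lambda>t. Yfun b lam \<phi> t j))"

definition condH :: "nat \<Rightarrow> real \<Rightarrow> (real \<Rightarrow> real) \<Rightarrow> bool" where
  "condH b lam \<phi> \<longleftrightarrow>
     (\<forall>i\<in>SigmaSp b. \<forall>j\<in>SigmaSp b. i \<noteq> j \<longrightarrow>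
        (\<exists>x. Yfun b lam \<phi> x j - Yfun b lam \<phi> x i \<noteq> 0))"

definition Fset :: "nat \<Rightarrow> real \<Rightarrow> (real \<Rightarrow> real) \<Rightarrow> nat \<Rightarrow> (real \<Rightarrow> real) set" where
  "Fset b lam \<phi> n =
     {(\<lambda>x. Gammafun b lam \<phi> u x - Gammafun b lam \<phi> v x) | u v.
        u \<in> SigmaSp b \<and> v \<in> SigmaSp b \<and> u n \<noteq> v n \<and> (\<forall>k. 1 \<le> k \<and> k < n \<longrightarrow> u k = v k)}"

end

theory Submission
  imports Defs
begin

lemma diffs_funpow:
  fixes a :: "nat \<Rightarrow> real"
  shows "(diffs ^^ k) a n = a (n + k) * fact (n + k) / fact n"
proof (induction k arbitrary: n)
  case 0 then show ?case by simp
next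
  case (Suc k)
  have "(diffs ^^ Suc k) a n = of_nat (Suc n) * (diffs ^^ k) a (Suc n)"
    by (simp add: diffs_def)
  also have "\<dots> = of_nat (Suc n) * (a (Suc n + k) * fact (Suc n + k) / fact (Suc n))"
    using Suc by simp
  also have "\<dots> = a (n + Suc k) * fact (n + Suc k) / fact n"
  proof -
    have e: "Suc n + k = n + Suc k" by simp
    have f: "fact (Suc n) = (of_nat (Suc n)::real) * fact n" by (rule fact_Suc)
    show ?thesis unfolding e f by (simp del: of_nat_Suc)
  qed
  finally show ?case .
qed

locale psloc =
  fixes \<phi> :: "real \<Rightarrow> real" and x0 r :: real and a :: "nat \<Rightarrow> real"
  assumes r: "r > 0" and ps: "\<And>x. \<bar>x - x0\<bar> < r \<Longrightarrow> (\<lambda>n. a n * (x - x0)^n) sums \<phi> x"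
begin

lemma sm: "\<bar>h\<bar> < r \<Longrightarrow> summable (\<lambda>n. (diffs^^k) a n * h^n)"
proof (induction k arbitrary: h)
  case 0
  then show ?case using ps[of "x0 + h"] by (simp add: sums_iff)
next
  case (Suc k)
  then show ?case using termdiff_converges[of h r "(diffs^^k) a"] by auto
qed

lemma der: "\<bar>h\<bar> < r \<Longrightarrow> ((\<lambda>y. \<Sum>n. (diffs^^k) a n * (y - x0)^n) has_real_derivative
     (\<Sum>n. (diffs^^Suc k) a n * h^n)) (at (x0 + h))"
proof -
  assume h: "\<bar>h\<bar> < r"
  have "((\<lambda>z. \<Sum>n. (diffs^^k) a n * z^n) has_real_derivative (\<Sum>n. diffs ((diffs^^k) a) n * h^n)) (at h)"
    by (rule termdiffs_strong'[of r]) (use sm h in auto)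
  then have "((\<lambda>y. \<Sum>n. (diffs^^k) a n * (y - x0)^n) has_real_derivative (\<Sum>n. diffs ((diffs^^k) a) n * h^n) * 1) (at (x0 + h))"
    by (intro DERIV_chain2[where g = "\<lambda>y. y - x0"]) (auto intro!: derivative_eq_intros)
  then show ?thesis by simp
qed

lemma val: "\<bar>x - x0\<bar> < r \<Longrightarrow> (deriv^^k) \<phi> x = (\<Sum>n. (diffs^^k) a n * (x - x0)^n)"
proof (induction k arbitrary: x)
  case 0
  then show ?case using ps[of x] by (simp add: sums_iff)
next
  case (Suc k)
  have d0: "((\<lambda>y. \<Sum>n. (diffs^^k) a n * (y - x0)^n) has_real_derivative
     (\<Sum>n. (diffs^^Suc k) a n * (x - x0)^n)) (at (x0 + (x - x0)))"
    by (rule der) (use Suc.prems in blast)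
  have d: "((\<lambda>y. \<Sum>n. (diffs^^k) a n * (y - x0)^n) has_real_derivative
     (\<Sum>n. (diffs^^Suc k) a n * (x - x0)^n)) (at x)"
    using d0 by simp
  have "((deriv^^k) \<phi> has_real_derivative (\<Sum>n. (diffs^^Suc k) a n * (x - x0)^n)) (at x)"
  proof (rule has_field_derivative_transform_within_open[OF d, of "ball x0 r"])
    show "open (ball x0 r)" by simp
    show "x \<in> ball x0 r" using Suc.prems by (simp add: dist_real_def abs_minus_commute)
    fix z assume "z \<in> ball x0 r"
    then have "\<bar>z - x0\<bar> < r" by (simp add: dist_real_def abs_minus_commute)
    from Suc.IH[OF this] show "(\<Sum>n. (diffs^^k) a n * (z - x0)^n) = (deriv^^k) \<phi> z" by simp
  qed
  then have "deriv ((deriv^^k) \<phi>) x = (\<Sum>n. (diffs^^Suc k) a n * (x - x0)^n)"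
    by (rule DERIV_imp_deriv)
  then show ?case by simp
qed

lemma derphi: "\<bar>x - x0\<bar> < r \<Longrightarrow> ((deriv^^k) \<phi> has_real_derivative (deriv^^Suc k) \<phi> x) (at x)"
proof -
  assume x: "\<bar>x - x0\<bar> < r"
  have d0: "((\<lambda>y. \<Sum>n. (diffs^^k) a n * (y - x0)^n) has_real_derivative
     (\<Sum>n. (diffs^^Suc k) a n * (x - x0)^n)) (at (x0 + (x - x0)))"
    by (rule der) (use x in blast)
  have d: "((\<lambda>y. \<Sum>n. (diffs^^k) a n * (y - x0)^n) has_real_derivative
     (\<Sum>n. (diffs^^Suc k) a n * (x - x0)^n)) (at x)"
    using d0 by simp
  have "((deriv^^k) \<phi> has_real_derivative (\<Sum>n. (diffs^^Suc k) a n * (x - x0)^n)) (at x)"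
  proof (rule has_field_derivative_transform_within_open[OF d, of "ball x0 r"])
    show "open (ball x0 r)" by simp
    show "x \<in> ball x0 r" using x by (simp add: dist_real_def abs_minus_commute)
    fix z assume "z \<in> ball x0 r"
    then have "\<bar>z - x0\<bar> < r" by (simp add: dist_real_def abs_minus_commute)
    from val[OF this, of k] show "(\<Sum>n. (diffs^^k) a n * (z - x0)^n) = (deriv^^k) \<phi> z" by simp
  qed
  then show ?thesis using val[OF x, of "Suc k"] by simp
qed

end


lemma fact_bound: "(fact (n+k) :: real) / fact n \<le> fact k * 2^(n+k)"
proof -
  have eq: "(fact (n+k) :: nat) = fact k * fact n * ((n+k) choose k)"
    using binomial_fact_lemma[of k "n+k"] by simp
  have "fact k * fact n * ((n+k) choose k) \<le> fact k * fact n * (2::nat)^(n+k)"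
    by (rule mult_le_mono2[OF binomial_le_pow2])
  then have "fact (n+k) \<le> fact k * fact n * (2::nat)^(n+k)" using eq by simp
  then have "real (fact (n+k)) \<le> real (fact k * fact n * 2^(n+k))"
    by (simp only: of_nat_le_iff)
  then have "(fact (n+k)::real) \<le> fact k * fact n * 2^(n+k)"
    by simp
  moreover have "(fact n :: real) > 0" by simp
  ultimately show ?thesis by (simp add: divide_simps mult_ac)
qed

context psloc
begin

lemma bound: "\<exists>M\<ge>0. \<forall>k y. \<bar>y - x0\<bar> < r/8 \<longrightarrow> \<bar>(deriv^^k) \<phi> y\<bar> \<le> M * fact k * (4/r)^k"
proof -
  define R where "R = r/2"
  have R: "R > 0" using r by (simp add: R_def)
  have "summable (\<lambda>n. a n * R^n)"
    using ps[of "x0 + R"] r by (simp add: R_def sums_iff)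
  then have "Bseq (\<lambda>n. a n * R^n)"
    by (intro convergent_imp_Bseq) (auto dest: summable_LIMSEQ_zero simp: convergent_def)
  then obtain M0 where M0: "M0 > 0" "\<And>n. \<bar>a n * R^n\<bar> \<le> M0" by (elim BseqE) auto
  have aM: "\<bar>a n\<bar> \<le> M0 / R^n" for n
    using M0(2)[of n] R by (simp add: field_simps abs_mult)
  show ?thesis
  proof (intro exI[of _ "2*M0"] conjI allI impI)
    show "0 \<le> 2 * M0" using M0 by simp
    fix k y assume y: "\<bar>y - x0\<bar> < r/8"
    define h where "h = y - x0"
    have h: "\<bar>h\<bar> \<le> R/4" using y by (simp add: h_def R_def)
    have tb: "\<bar>(diffs^^k) a n * h^n\<bar> \<le> M0 * fact k * (4/r)^k * (1/2)^n" for n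
    proof -
      have "\<bar>(diffs^^k) a n * h^n\<bar> = \<bar>a (n+k)\<bar> * (fact (n+k) / fact n) * \<bar>h\<bar>^n"
        by (simp add: diffs_funpow abs_mult power_abs)
      also have "\<dots> \<le> (M0 / R^(n+k)) * (fact k * 2^(n+k)) * (R/4)^n"
        by (intro mult_mono aM fact_bound power_mono) (use h R M0 in auto)
      also have "\<dots> = M0 * fact k * (2/R)^k * (1/2)^n"
      proof -
        have four: "(4::real)^n = 2^n * 2^n" by (simp flip: power_mult_distrib)
        have alg: "\<And>A B P Q F. A > 0 \<Longrightarrow> B > 0 \<Longrightarrow> P > 0 \<Longrightarrow>
          (M0::real)/(A*B) * (F*(P*Q)) * (A/(P*P)) = M0*F*(Q/B)*(1/P)"
          by (simp add: field_simps)
        show ?thesis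
          unfolding power_add power_divide four power_one using R
          by (intro alg) auto
      qed
      also have "\<dots> = M0 * fact k * (4/r)^k * (1/2)^n"
        by (simp add: R_def)
      finally show ?thesis .
    qed
    have sumg: "summable (\<lambda>n. M0 * fact k * (4/r)^k * (1/2::real)^n)"
      by (intro summable_mult summable_geometric) simp
    have "\<bar>(deriv^^k) \<phi> y\<bar> = \<bar>\<Sum>n. (diffs^^k) a n * h^n\<bar>"
      using val[of y k] y r by (simp add: h_def)
    also have "\<dots> \<le> (\<Sum>n. M0 * fact k * (4/r)^k * (1/2::real)^n)"
      using norm_suminf_le[of "\<lambda>n. (diffs^^k) a n * h^n", OF _ sumg] tb by (simp add: real_norm_def)
    also have "\<dots> = M0 * fact k * (4/r)^k * (\<Sum>n. (1/2::real)^n)"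
      by (intro suminf_mult summable_geometric) simp
    also have "\<dots> = 2 * M0 * fact k * (4/r)^k"
      by (subst suminf_geometric) auto
    finally show "\<bar>(deriv^^k) \<phi> y\<bar> \<le> 2 * M0 * fact k * (4/r)^k" .
  qed
qed

end

context
  fixes \<phi> :: "real \<Rightarrow> real"
  assumes ra: "real_analytic \<phi>"
begin

lemma ra_at: "\<exists>r>0. \<exists>a::nat\<Rightarrow>real. \<forall>y. \<bar>y - x0\<bar> < r \<longrightarrow> (\<lambda>n. a n * (y - x0)^n) sums \<phi> y"
  using ra unfolding real_analytic_def by (rule spec)

lemma smooth: "((deriv^^k) \<phi> has_real_derivative (deriv^^Suc k) \<phi> x) (at x)"
proof -
  obtain r a where r0: "r>0" and ra': "\<forall>y. \<bar>y - x\<bar> < r \<longrightarrow> (\<lambda>n. a n * (y - x)^n) sums \<phi> y"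
    using ra_at[of x] by blast
  have "psloc \<phi> x r a"
    by (unfold_locales) (use r0 ra' in blast)+
  then interpret psloc \<phi> x r a .
  have "\<bar>x - x\<bar> < r" using r0 by simp
  then show ?thesis by (rule derphi)
qed

lemma local_bound: "\<exists>\<rho>>0. \<exists>M\<ge>0. \<exists>L>0. \<forall>k y. \<bar>y - x0\<bar> < \<rho> \<longrightarrow> \<bar>(deriv^^k) \<phi> y\<bar> \<le> M * fact k * L^k"
proof -
  obtain r a where r0: "r>0" and ra': "\<forall>y. \<bar>y - x0\<bar> < r \<longrightarrow> (\<lambda>n. a n * (y - x0)^n) sums \<phi> y"
    using ra_at[of x0] by blast
  have "psloc \<phi> x0 r a"
    by (unfold_locales) (use r0 ra' in blast)+
  then interpret psloc \<phi> x0 r a .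
  obtain M where M: "M \<ge> 0" "\<forall>k y. \<bar>y - x0\<bar> < r/8 \<longrightarrow> \<bar>(deriv^^k) \<phi> y\<bar> \<le> M * fact k * (4/r)^k"
    using bound by blast
  have "r/8 > 0" "4/r > 0" using r0 by auto
  then show ?thesis using M by blast
qed

lemma per_k:
  assumes per: "\<And>x. \<phi> (x + 1) = \<phi> x"
  shows "(deriv^^k) \<phi> (x + 1) = (deriv^^k) \<phi> x"
proof (induction k arbitrary: x)
  case 0 then show ?case using per by simp
next
  case (Suc k)
  have "((\<lambda>y. (deriv^^k) \<phi> (y + 1)) has_real_derivative (deriv^^Suc k) \<phi> (x + 1) * 1) (at x)"
    by (rule DERIV_chain2[OF smooth]) (auto intro!: derivative_eq_intros)
  moreover have "(\<lambda>y. (deriv^^k) \<phi> (y + 1)) = (deriv^^k) \<phi>" using Suc by auto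
  ultimately have "((deriv^^k) \<phi> has_real_derivative (deriv^^Suc k) \<phi> (x + 1)) (at x)" by simp
  then show ?case using smooth DERIV_unique by blast
qed

lemma global_bound:
  assumes per: "\<And>x. \<phi> (x + 1) = \<phi> x"
  shows "\<exists>C\<ge>0. \<exists>L>0. \<forall>k x. \<bar>(deriv^^k) \<phi> x\<bar> \<le> C * fact k * L^k"
proof -
  have "\<forall>x0. \<exists>\<rho>. \<rho> > 0 \<and> (\<exists>M. M \<ge> 0 \<and> (\<exists>L. L > 0 \<and> (\<forall>k y. \<bar>y - x0\<bar> < \<rho> \<longrightarrow> \<bar>(deriv^^k) \<phi> y\<bar> \<le> M * fact k * L^k)))"
    using local_bound by blast
  then have "\<exists>\<rho>. \<forall>x0. \<rho> x0 > 0 \<and> (\<exists>M. M \<ge> 0 \<and> (\<exists>L. L > 0 \<and> (\<forall>k y. \<bar>y - x0\<bar> < \<rho> x0 \<longrightarrow> \<bar>(deriv^^k) \<phi> y\<bar> \<le> M * fact k * L^k)))"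
    by (rule choice)
  then obtain \<rho> where \<rho>0: "\<forall>x0. \<rho> x0 > 0 \<and> (\<exists>M. M \<ge> 0 \<and> (\<exists>L. L > 0 \<and> (\<forall>k y. \<bar>y - x0\<bar> < \<rho> x0 \<longrightarrow> \<bar>(deriv^^k) \<phi> y\<bar> \<le> M * fact k * L^k)))" ..
  then have "\<exists>M. \<forall>x0. M x0 \<ge> 0 \<and> (\<exists>L. L > 0 \<and> (\<forall>k y. \<bar>y - x0\<bar> < \<rho> x0 \<longrightarrow> \<bar>(deriv^^k) \<phi> y\<bar> \<le> M x0 * fact k * L^k))"
    by (intro choice) blast
  then obtain M where M: "\<forall>x0. M x0 \<ge> 0 \<and> (\<exists>L. L > 0 \<and> (\<forall>k y. \<bar>y - x0\<bar> < \<rho> x0 \<longrightarrow> \<bar>(deriv^^k) \<phi> y\<bar> \<le> M x0 * fact k * L^k))" ..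
  then have "\<exists>L. \<forall>x0. L x0 > 0 \<and> (\<forall>k y. \<bar>y - x0\<bar> < \<rho> x0 \<longrightarrow> \<bar>(deriv^^k) \<phi> y\<bar> \<le> M x0 * fact k * L x0 ^k)"
    by (intro choice) blast
  then obtain L where L: "\<forall>x0. L x0 > 0 \<and> (\<forall>k y. \<bar>y - x0\<bar> < \<rho> x0 \<longrightarrow> \<bar>(deriv^^k) \<phi> y\<bar> \<le> M x0 * fact k * L x0 ^k)" ..
  have \<rho>: "\<And>x0. \<rho> x0 > 0" using \<rho>0 by blast
  have MLp: "\<And>x0. M x0 \<ge> 0" "\<And>x0. L x0 > 0" using M L by blast+
  have bd: "\<And>x0 k y. \<bar>y - x0\<bar> < \<rho> x0 \<Longrightarrow> \<bar>(deriv^^k) \<phi> y\<bar> \<le> M x0 * fact k * L x0 ^ k"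
    using L by blast
  have cov: "{0..1::real} \<subseteq> (\<Union>x0\<in>{0..1}. ball x0 (\<rho> x0))"
    using \<rho> by auto
  have "\<exists>C'. C' \<subseteq> {0..1} \<and> finite C' \<and> {0..1::real} \<subseteq> (\<Union>x0\<in>C'. ball x0 (\<rho> x0))"
    by (rule compactE_image[OF compact_Icc[of 0 1], of "{0..1}" "\<lambda>x0. ball x0 (\<rho> x0)"]) (use cov in auto)
  then obtain C' where C': "C' \<subseteq> {0..1}" "finite C'" "{0..1::real} \<subseteq> (\<Union>x0\<in>C'. ball x0 (\<rho> x0))"
    by blast
  have ne: "C' \<noteq> {}" using C'(3) by auto
  define Cm where "Cm = Max (M ` C')"
  define Lm where "Lm = Max (L ` C')"
  have Cm: "\<And>x0. x0 \<in> C' \<Longrightarrow> M x0 \<le> Cm" unfolding Cm_def using C'(2) by auto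
  have Lm: "\<And>x0. x0 \<in> C' \<Longrightarrow> L x0 \<le> Lm" unfolding Lm_def using C'(2) by auto
  obtain z where z: "z \<in> C'" using ne by auto
  have Cm0: "Cm \<ge> 0" using Cm[OF z] MLp(1)[of z] by linarith
  have Lm0: "Lm > 0" using Lm[OF z] MLp(2)[of z] by linarith
  have b01: "\<bar>(deriv^^k) \<phi> y\<bar> \<le> Cm * fact k * Lm^k" if y01: "y \<in> {0..1}" for k y
  proof -
    obtain x0 where x0: "x0 \<in> C'" "y \<in> ball x0 (\<rho> x0)" using C'(3) y01 by blast

    have "\<bar>(deriv^^k) \<phi> y\<bar> \<le> M x0 * fact k * L x0 ^ k"
      using bd x0 by (auto simp: dist_real_def abs_minus_commute)
    also have "\<dots> \<le> Cm * fact k * Lm^k"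
      using Cm[OF x0(1)] Lm[OF x0(1)] MLp[of x0]
      by (intro mult_mono power_mono) auto
    finally show ?thesis .
  qed
  have shift: "(deriv^^k) \<phi> (y + real n) = (deriv^^k) \<phi> y" for k n y
  proof (induction n)
    case 0 then show ?case by simp
  next
    case (Suc n)
    have "(deriv^^k) \<phi> (y + real (Suc n)) = (deriv^^k) \<phi> ((y + real n) + 1)" by (simp add: algebra_simps)

    also have "\<dots> = (deriv^^k) \<phi> (y + real n)" by (rule per_k[OF per])
    finally show ?case using Suc by simp
  qed
  have "\<bar>(deriv^^k) \<phi> x\<bar> \<le> Cm * fact k * Lm^k" for k x
  proof -
    have f01: "frac x \<in> {0..1}" using frac_ge_0[of x] frac_lt_1[of x] by auto
    have "(deriv^^k) \<phi> x = (deriv^^k) \<phi> (frac x)"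
    proof (cases "\<lfloor>x\<rfloor> \<ge> 0")
      case True
      have "x = frac x + real (nat \<lfloor>x\<rfloor>)" using True by (simp add: frac_def)
      then show ?thesis using shift[of k "frac x" "nat \<lfloor>x\<rfloor>"] by simp
    next
      case False
      have "frac x = x + real (nat (- \<lfloor>x\<rfloor>))" using False by (simp add: frac_def)
      then show ?thesis using shift[of k x "nat (- \<lfloor>x\<rfloor>)"] by simp
    qed
    then show ?thesis using b01[OF f01] by simp
  qed
  then show ?thesis using Cm0 Lm0 by blast
qed

end


lemma ident_local:
  fixes F :: "nat \<Rightarrow> real \<Rightarrow> real"
  assumes der: "\<And>k x. (F k has_real_derivative F (Suc k) x) (at x)"
    and bd: "\<And>k x. \<bar>F k x\<bar> \<le> C * fact k * L^k" and L: "L > 0"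
    and z: "\<And>k. F k x = 0"
    and y: "\<bar>y - x\<bar> \<le> 1 / (4*L)"
  shows "F k y = 0"
proof (cases "y = x")
  case True then show ?thesis using z by simp
next
  case False
  define K where "K = C * fact k * (2*L)^k"
  have C0: "C \<ge> 0" using bd[of 0 x] by simp
  have tb: "\<bar>F k y\<bar> \<le> K * (1/2)^n" if n: "n > 0" for n
  proof -
    have "\<exists>t. (if y < x then y < t \<and> t < x else x < t \<and> t < y) \<and>
      F k y = (\<Sum>m<n. (F (k+m) x / fact m) * (y - x)^m) + (F (k+n) t / fact n) * (y - x)^n"
      by (rule Taylor[of n "\<lambda>m. F (k+m)" "F k" "min x y" "max x y"])
         (use n der False in auto)
    then obtain t where t: "F k y = (\<Sum>m<n. (F (k+m) x / fact m) * (y - x)^m) + (F (k+n) t / fact n) * (y - x)^n"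
      by blast
    have "F k y = (F (k+n) t / fact n) * (y - x)^n" using t z by simp
    then have "\<bar>F k y\<bar> = \<bar>F (k+n) t\<bar> / fact n * \<bar>y - x\<bar>^n"
      by (simp add: abs_mult power_abs)
    also have "\<dots> \<le> (C * fact (k+n) * L^(k+n)) / fact n * (1/(4*L))^n"
        by (intro mult_mono divide_right_mono power_mono bd) (use y C0 L in auto)
    also have "\<dots> = C * L^(k+n) * (fact (n+k) / fact n) * (1/(4*L))^n"
      by (simp add: add.commute)
    also have "\<dots> \<le> C * L^(k+n) * (fact k * 2^(n+k)) * (1/(4*L))^n"
    proof -
      show ?thesis

        by (intro mult_mono mult_left_mono fact_bound) (use C0 L in auto)
    qed
    also have "\<dots> = K * (1/2)^n"
    proof -
      have four: "(4::real)^n = 2^n * 2^n" by (simp flip: power_mult_distrib)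
      have alg: "\<And>A B P Q Ln Lk. A > 0 \<Longrightarrow> P > 0 \<Longrightarrow> Ln > 0 \<Longrightarrow>
          C * (Lk * Ln) * (F * (P*Q)) * (1/(P*P*Ln)) = C * F * (Q * Lk) * (1/P)"
        for F :: real by (simp add: field_simps)
      show ?thesis unfolding K_def power_add power_divide power_mult_distrib four power_one
        using L by (intro alg[of 1]) auto
    qed
    finally show ?thesis .
  qed
  have lim: "(\<lambda>n. K * (1/2::real)^n) \<longlonglongrightarrow> K * 0"
    by (intro tendsto_mult tendsto_const LIMSEQ_realpow_zero) auto
  have "\<bar>F k y\<bar> \<le> K * 0"
    by (rule LIMSEQ_le_const[OF lim]) (use tb in \<open>auto intro!: exI[of _ 1]\<close>)
  then show ?thesis by simp
qed

lemma ident: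
  fixes F :: "nat \<Rightarrow> real \<Rightarrow> real"
  assumes der: "\<And>k x. (F k has_real_derivative F (Suc k) x) (at x)"
    and bd: "\<And>k x. \<bar>F k x\<bar> \<le> C * fact k * L^k" and L: "L > 0"
    and z: "\<And>k. F k x0 = 0"
  shows "F k y = 0"
proof -
  define \<rho> where "\<rho> = 1 / (4*L)"
  have \<rho>: "\<rho> > 0" using L by (simp add: \<rho>_def)
  have spread: "\<forall>y. \<bar>y - x0\<bar> \<le> real n * \<rho> \<longrightarrow> (\<forall>k. F k y = 0)" for n
  proof (induction n)
    case 0 then show ?case using z by simp
  next
    case (Suc n)
    show ?case
    proof (intro allI impI)
      fix y k assume y: "\<bar>y - x0\<bar> \<le> real (Suc n) * \<rho>"
      define y' where "y' = x0 + (y - x0) * (real n / real (Suc n))"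
      have "\<bar>y' - x0\<bar> = \<bar>y - x0\<bar> * (real n / real (Suc n))"
        by (simp add: y'_def abs_mult)
      also have "\<dots> \<le> real (Suc n) * \<rho> * (real n / real (Suc n))"
        by (intro mult_right_mono y) auto
      also have "\<dots> = real n * \<rho>" by (simp add: field_simps)
      finally have "\<forall>k. F k y' = 0" using Suc.IH by blast
      moreover have "\<bar>y - y'\<bar> \<le> \<rho>"
      proof -
        have "y - y' = (y - x0) / real (Suc n)"
          by (simp add: y'_def field_simps)
        then have "\<bar>y - y'\<bar> = \<bar>y - x0\<bar> / real (Suc n)" by simp
        also have "\<dots> \<le> real (Suc n) * \<rho> / real (Suc n)"
          by (intro divide_right_mono y) auto
        also have "\<dots> = \<rho>" by simp
        finally show ?thesis .
      qed
      ultimately show "F k y = 0"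
        using ident_local[OF der bd L, of y' y k] by (simp add: \<rho>_def)
    qed
  qed
  obtain n where "\<bar>y - x0\<bar> / \<rho> \<le> real n" using real_arch_simple by blast
  then have "\<bar>y - x0\<bar> \<le> real n * \<rho>" using \<rho> by (simp add: field_simps)
  then show ?thesis using spread by blast
qed

lemma gamma_deriv:
  fixes g :: "real \<Rightarrow> real"
  assumes cont: "continuous_on UNIV g"
  shows "((\<lambda>x. if 0 \<le> x then integral {0..x} g else - integral {x..0} g) has_real_derivative g x) (at x)"
proof -
  define a where "a = - (\<bar>x\<bar> + 1)"
  define c where "c = \<bar>x\<bar> + 1"
  have ac: "a < 0" "0 < c" "a < x" "x < c" by (auto simp: a_def c_def)
  have int: "g integrable_on {a..c}"
    by (intro integrable_continuous_interval continuous_on_subset[OF cont]) auto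
  have eq: "(if 0 \<le> y then integral {0..y} g else - integral {y..0} g) = integral {a..y} g - integral {a..0} g"
    if y: "y \<in> {a<..<c}" for y
  proof (cases "0 \<le> y")
    case True
    have "integral {a..0} g + integral {0..y} g = integral {a..y} g"
      by (rule Henstock_Kurzweil_Integration.integral_combine)
         (use True ac y in \<open>auto intro: integrable_on_subinterval[OF int]\<close>)
    then show ?thesis using True by simp
  next
    case False
    have "integral {a..y} g + integral {y..0} g = integral {a..0} g"
      by (rule Henstock_Kurzweil_Integration.integral_combine)
         (use False ac y in \<open>auto intro: integrable_on_subinterval[OF int]\<close>)
    then show ?thesis using False by simp
  qed
  have ic: "isCont g x" using cont by (simp add: continuous_on_eq_continuous_at)
  have "((\<lambda>u. integral {a..u} g) has_vector_derivative g x) (at x within ({a..c} - {}))"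
    by (rule integral_has_vector_derivative_continuous_at)
       (use int ac continuous_at_imp_continuous_at_within[OF ic] in auto)

  moreover have "at x within ({a..c} - {}) = at x"
    by (rule at_within_interior) (use ac in auto)
  ultimately have "((\<lambda>u. integral {a..u} g) has_real_derivative g x) (at x)"
    by (simp add: has_real_derivative_iff_has_vector_derivative)
  then have "((\<lambda>u. integral {a..u} g - integral {a..0} g) has_real_derivative g x - 0) (at x)"
    by (intro DERIV_diff DERIV_const)
  then have d: "((\<lambda>u. integral {a..u} g - integral {a..0} g) has_real_derivative g x) (at x)" by simp
  show ?thesis
    by (rule has_field_derivative_transform_within_open[OF d, of "{a<..<c}"])
       (use ac eq in auto)
qed


definition cc :: "nat \<Rightarrow> nat \<Rightarrow> (nat \<Rightarrow> nat) \<Rightarrow> real" where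
  "cc b n u = (\<Sum>k=1..n. real (u k) / real b ^ (n - k + 1))"

definition Tm :: "nat \<Rightarrow> real \<Rightarrow> (real \<Rightarrow> real) \<Rightarrow> nat \<Rightarrow> (nat \<Rightarrow> nat) \<Rightarrow> real \<Rightarrow> nat \<Rightarrow> real" where
  "Tm b lam \<phi> k u x m = (1 / (real b * lam)) ^ Suc m * (1 / real b ^ Suc m) ^ k *
     (deriv^^Suc k) \<phi> (x / real b ^ Suc m + cc b (Suc m) u)"

definition Yk :: "nat \<Rightarrow> real \<Rightarrow> (real \<Rightarrow> real) \<Rightarrow> nat \<Rightarrow> (nat \<Rightarrow> nat) \<Rightarrow> real \<Rightarrow> real" where
  "Yk b lam \<phi> k u x = - (\<Sum>m. Tm b lam \<phi> k u x m)"

lemma Suc_le_pow2: "real (Suc k) \<le> 2 ^ k"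
proof (induction k)
  case 0 then show ?case by simp
next
  case (Suc k)
  have "real (Suc (Suc k)) \<le> 2 * real (Suc k)" by simp
  also have "\<dots> \<le> 2 * 2^k" using Suc by simp
  finally show ?case by simp
qed

locale ysetup =
  fixes b :: nat and lam :: real and \<phi> :: "real \<Rightarrow> real" and C L :: real
  assumes b2: "b \<ge> 2" and lam1: "1 / real b < lam" and lam2: "lam < 1"
    and ra: "real_analytic \<phi>"
    and C: "C \<ge> 0" and L: "L > 0"
    and bd: "\<And>k x. \<bar>(deriv^^k) \<phi> x\<bar> \<le> C * fact k * L^k"
begin

definition "gam = 1 / (real b * lam)"

lemma bpos: "real b > 0" using b2 by simp

lemma blam: "real b * lam > 1"
proof -
  have "real b * (1 / real b) < real b * lam" using lam1 bpos by (intro mult_strict_left_mono) auto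
  then show ?thesis using bpos by simp
qed

lemma gam: "0 < gam" "gam < 1" using blam by (auto simp: gam_def)

lemma Tm_gam: "Tm b lam \<phi> k u x m = gam ^ Suc m * ((1 / real b ^ Suc m) ^ k *
     (deriv^^Suc k) \<phi> (x / real b ^ Suc m + cc b (Suc m) u))"
  by (simp add: Tm_def gam_def mult.assoc)

lemma Tbound: "\<bar>Tm b lam \<phi> k u x m\<bar> \<le> gam ^ Suc m * (C * fact (Suc k) * L ^ Suc k)"
proof -
  have b1: "real b ^ Suc m \<ge> 1" using b2 by (intro one_le_power) simp
  have p: "(1 / real b ^ Suc m) ^ k \<le> 1" "0 \<le> (1 / real b ^ Suc m) ^ k"
    using b1 by (auto intro!: power_le_one)
  have "\<bar>Tm b lam \<phi> k u x m\<bar> = gam ^ Suc m * ((1 / real b ^ Suc m) ^ k *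
     \<bar>(deriv^^Suc k) \<phi> (x / real b ^ Suc m + cc b (Suc m) u)\<bar>)"
    unfolding Tm_gam using gam p by (simp add: abs_mult)
  also have "\<dots> \<le> gam ^ Suc m * (1 * (C * fact (Suc k) * L ^ Suc k))"
    by (intro mult_left_mono mult_mono p bd) (use gam in auto)
  finally show ?thesis by simp
qed

lemma sumg: "summable (\<lambda>m. gam ^ Suc m * K)"
proof -
  have "summable (\<lambda>m. (gam * K) * gam ^ m)"
    by (intro summable_mult summable_geometric) (use gam in auto)
  then show ?thesis by (simp add: mult_ac)
qed

lemma sum_val: "(\<Sum>m. gam ^ Suc m * K) = gam / (1 - gam) * K"
proof -
  have "(\<Sum>m. (gam * K) * gam ^ m) = (gam * K) * (\<Sum>m. gam ^ m)"
    by (intro suminf_mult summable_geometric) (use gam in auto)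
  also have "\<dots> = (gam * K) * (1 / (1 - gam))"
    by (subst suminf_geometric) (use gam in auto)
  finally show ?thesis by (simp add: mult_ac)
qed

lemma Tder: "((\<lambda>x. Tm b lam \<phi> k u x m) has_real_derivative Tm b lam \<phi> (Suc k) u x m) (at x)"
proof -
  define B where "B = real b ^ Suc m"
  define c where "c = cc b (Suc m) u"
  have B: "B > 0" using bpos by (simp add: B_def)
  have a: "((\<lambda>x. x / B + c) has_real_derivative 1 / B) (at x)"
    using B by (auto intro!: derivative_eq_intros)
  have "((\<lambda>x. (deriv^^Suc k)
 \<phi> (x / B + c)) has_real_derivative
      (deriv^^Suc (Suc k)) \<phi> (x / B + c) * (1 / B)) (at x)"
    by (rule DERIV_chain2[OF smooth[OF ra] a])
  then have "((\<lambda>x. gam ^ Suc m * ((1 / B) ^ k * (deriv^^Suc k) \<phi> (x / B + c))) has_real_derivative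
      gam ^ Suc m * ((1 / B) ^ k * ((deriv^^Suc (Suc k)) \<phi> (x / B + c) * (1 / B)))) (at x)"
    by (intro DERIV_cmult)
  moreover have "gam ^ Suc m * ((1 / B) ^ k * ((deriv^^Suc (Suc k)) \<phi> (x / B + c) * (1 / B)))
     = gam ^ Suc m * ((1 / B) ^ Suc k * (deriv^^Suc (Suc k)) \<phi> (x / B + c))"
    by (simp only: power_Suc mult_ac)
  ultimately show ?thesis unfolding Tm_gam B_def c_def by simp
qed

lemma Yk_fun: "Yk b lam \<phi> k u = (\<lambda>x. - (\<Sum>m. Tm b lam \<phi> k u x m))"
  by (rule ext) (simp add: Yk_def)

lemma Yder: "(Yk b lam \<phi> k u has_real_derivative Yk b lam \<phi> (Suc k) u x) (at x)"
proof -
  have uc: "uniformly_convergent_on UNIV (\<lambda>N x. \<Sum>m<N. Tm b lam \<phi> (Suc k) u x m)"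
    by (rule Weierstrass_m_test'[of UNIV _ "\<lambda>m. gam ^ Suc m * (C * fact (Suc (Suc k)) * L ^ Suc (Suc k))"])
       (simp_all only: real_norm_def Tbound sumg)
  have s0: "summable (\<lambda>m. Tm b lam \<phi> k u 0 m)"
    by (rule summable_comparison_test[OF _ sumg[of "C * fact (Suc k) * L ^ Suc k"]])
       (simp_all only: real_norm_def Tbound, blast)
  have "((\<lambda>x. \<Sum>m. Tm b lam \<phi> k u x m) has_real_derivative (\<Sum>m. Tm b lam \<phi> (Suc k) u x m)) (at x)"
  proof -
    have dd: "\<And>n x. x \<in> UNIV \<Longrightarrow> ((\<lambda>x. Tm b lam \<phi> k u x n) has_field_derivative Tm b lam \<phi> (Suc k) u x n) (at x within UNIV)"
      using Tder by simp
    show ?thesis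
      using has_field_derivative_series'(2)[OF convex_UNIV dd uc _ s0, of x] by simp
  qed

  then have "((\<lambda>x. - (\<Sum>m. Tm b lam \<phi> k u x m)) has_real_derivative - (\<Sum>m. Tm b lam \<phi> (Suc k) u x m)) (at x)"
    by (rule DERIV_minus)
  then show ?thesis unfolding Yk_fun by simp
qed

lemma Yk0: "Yk b lam \<phi> 0 u x = Yfun b lam \<phi> x u"
  by (simp add: Yk_def Tm_def Yfun_def cc_def Let_def)

lemma Yk_funpow: "(deriv^^k) (\<lambda>x. Yk b lam \<phi> 0 u x - Yk b lam \<phi> 0 v x) = (\<lambda>x. Yk b lam \<phi> k u x - Yk b lam \<phi> k v x)"
proof (induction k)
  case 0 then show ?case by simp
next
  case (Suc k)
  have "(deriv^^Suc k) (\<lambda>x. Yk b lam \<phi> 0 u x - Yk b lam \<phi> 0 v x) = deriv (\<lambda>x. Yk b lam \<phi> k u x - Yk b lam \<phi> k v x)"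
    using Suc by simp
  also have "\<dots> = (\<lambda>x. Yk b lam \<phi> (Suc k) u x - Yk b lam \<phi> (Suc k) v x)"
    by (rule ext, rule DERIV_imp_deriv, rule DERIV_diff) (rule Yder)+
  finally show ?case .
qed

definition "C' = gam / (1 - gam) * C * L"

lemma C'_nonneg: "C' \<ge> 0" using gam C L by (simp add: C'_def)

lemma Ybound: "\<bar>Yk b lam \<phi> k u x\<bar> \<le> C' * fact k * (2*L)^k"
proof -
  define K where "K = C * fact (Suc k) * L ^ Suc k"
  have "\<bar>Yk b lam \<phi> k u x\<bar> = \<bar>\<Sum>m. Tm b lam \<phi> k u x m\<bar>" by (simp add: Yk_def)
  also have "\<dots> \<le> (\<Sum>m. gam ^ Suc m * K)"
    using norm_suminf_le[of "\<lambda>m. Tm b lam \<phi> k u x m", OF _ sumg[of K]] Tbound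
    by (simp add: real_norm_def K_def)
  also have "\<dots> = gam / (1 - gam) * K" by (rule sum_val)
  also have "\<dots> \<le> gam / (1 - gam) * (C * L * fact k * (2*L)^k)"
  proof (intro mult_left_mono)
    have "K = C * L * (real (Suc k) * fact k * L^k)"
      by (simp add: K_def mult_ac)
    also have "\<dots> \<le> C * L * (2^k * fact k * L^k)"
      by (intro mult_left_mono mult_right_mono Suc_le_pow2) (use C L in auto)
    also have "\<dots> = C * L * fact k * (2*L)^k"
      by (simp add: power_mult_distrib mult_ac)
    finally show "K \<le> C * L * fact k * (2*L)^k" .
    show "0 \<le> gam / (1 - gam)" using gam by simp
  qed
  also have "\<dots> = C' * fact k * (2*L)^k" by (simp add: C'_def mult_ac)
  finally show ?thesis .
qed

lemma nonvanish:
  assumes H: "condH b lam \<phi>" and u: "u \<in> SigmaSp b" and v: "v \<in> SigmaSp b" and uv: "u \<noteq> v"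
  shows "\<exists>k. Yk b lam \<phi> k u x - Yk b lam \<phi> k v x \<noteq> 0"
proof (rule ccontr)
  assume "\<not> ?thesis"
  then have z: "\<And>k. Yk b lam \<phi> k u x - Yk b lam \<phi> k v x = 0" by blast
  define F where "F k y = Yk b lam \<phi> k u y - Yk b lam \<phi> k v y" for k y
  have der: "\<And>k y. (F k has_real_derivative F (Suc k) y) (at y)"
    unfolding F_def by (rule DERIV_diff) (rule Yder)+
  have fb: "\<bar>F k y\<bar> \<le> (2 * C') * fact k * (2*L)^k" for k y
  proof -
    have "\<bar>F k y\<bar> \<le> \<bar>Yk b lam \<phi> k u y\<bar> + \<bar>Yk b lam \<phi> k v y\<bar>" unfolding F_def by linarith
    also have "\<dots> \<le> C' * fact k * (2*L)^k + C' * fact k * (2*L)^k" by (intro add_mono Ybound)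
    also have "\<dots> = (2 * C') * fact k * (2*L)^k" by simp
    finally show ?thesis .

  qed
  have all0: "F 0 y = 0" for y
    by (rule ident[OF der fb, of x]) (use L z F_def in auto)
  from H u v uv obtain y where "Yfun b lam \<phi> y v - Yfun b lam \<phi> y u \<noteq> 0"
    unfolding condH_def by blast
  moreover have "F 0 y = 0" by (rule all0)
  ultimately show False by (simp add: F_def Yk0)
qed

lemma Dcont: "continuous_on UNIV ((deriv^^j) \<phi>)"
  by (intro continuous_at_imp_continuous_on ballI DERIV_isCont[OF smooth[OF ra]])

lemma coord_cont0: "continuous_on UNIV (\<lambda>p::(nat\<Rightarrow>nat)\<times>real. fst p i)"
proof -
  have "continuous_on UNIV (\<lambda>u::nat\<Rightarrow>nat. u i)" by simp
  then show "continuous_on UNIV (\<lambda>p::(nat\<Rightarrow>nat)\<times>real. fst p i)"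
    by (rule continuous_on_compose2[OF _ continuous_on_fst[OF continuous_on_id]]) auto
qed

lemma coord_cont: "continuous_on UNIV (\<lambda>p::(nat\<Rightarrow>nat)\<times>real. real (fst p i))"
proof -
  note coord_cont0
  then show ?thesis
    by (rule continuous_on_compose2[of UNIV "\<lambda>n::nat. real n", OF Topological_Spaces.continuous_on_discrete]) auto

qed

lemma Tm_cont: "continuous_on UNIV (\<lambda>p::(nat\<Rightarrow>nat)\<times>real. Tm b lam \<phi> k (fst p) (snd p) m)"
proof -
  have arg: "continuous_on UNIV (\<lambda>p::(nat\<Rightarrow>nat)\<times>real. snd p / real b ^ Suc m + cc b (Suc m) (fst p))"
    unfolding cc_def using bpos by (intro continuous_intros coord_cont coord_cont0) auto

  have "continuous_on UNIV (\<lambda>p::(nat\<Rightarrow>nat)\<times>real. (deriv^^Suc k) \<phi> (snd p / real b ^ Suc m + cc b (Suc m) (fst p)))"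
    by (rule continuous_on_compose2[OF Dcont arg]) auto
  then show ?thesis unfolding Tm_def by (intro continuous_intros)
qed

lemma Yk_cont: "continuous_on UNIV (\<lambda>p::(nat\<Rightarrow>nat)\<times>real. Yk b lam \<phi> k (fst p) (snd p))"
proof -
  have ul: "uniform_limit UNIV (\<lambda>N p. \<Sum>m<N. Tm b lam \<phi> k (fst p) (snd p) m)
      (\<lambda>p. \<Sum>m. Tm b lam \<phi> k (fst p) (snd p) m) sequentially"
    by (rule Weierstrass_m_test[of UNIV _ "\<lambda>m. gam ^ Suc m * (C * fact (Suc k) * L ^ Suc k)"])
       (simp_all only: real_norm_def Tbound sumg)
  have "continuous_on UNIV (\<lambda>p::(nat\<Rightarrow>nat)\<times>real. \<Sum>m. Tm b lam \<phi> k (fst p) (snd p) m)"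
    by (rule uniform_limit_theorem[OF _ ul]) (auto intro!: always_eventually continuous_on_sum Tm_cont)
  then show ?thesis unfolding Yk_def by (intro continuous_intros)
qed

end


lemma compact_PiE_fin:
  fixes S :: "nat \<Rightarrow> nat set"
  assumes "\<And>n. finite (S n)"
  shows "compact (PiE UNIV S)"
proof -
  have "compactin (product_topology (\<lambda>_. euclidean) UNIV) (PiE UNIV S)"
    using assms by (auto simp: compactin_PiE intro: finite_imp_compact)
  then show ?thesis by (simp add: euclidean_product_topology)
qed

context ysetup
begin

definition "Sg i = PiE UNIV (\<lambda>n::nat. if n = 0 then {0} else if n = 1 then {i} else {..<b})"

lemma Sg_compact: "compact (Sg i)"
  unfolding Sg_def by (rule compact_PiE_fin) auto


lemma Sg_mem: "u \<in> Sg i \<longleftrightarrow> u 0 = 0 \<and> u 1 = i \<and> (\<forall>n\<ge>2. u n < b)"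
proof
  assume "u \<in> Sg i"
  then have "\<And>n. u n \<in> (if n = 0 then {0} else if n = 1 then {i} else {..<b})"
    unfolding Sg_def by (auto simp: PiE_iff)
  note h = this
  have "u 0 = 0" using h[of 0] by simp
  moreover have "u 1 = i" using h[of 1] by simp
  moreover have "\<forall>n\<ge>2. u n < b"
  proof (intro allI impI)
    fix n :: nat assume "n \<ge> 2"
    then have "n \<noteq> 0" "n \<noteq> 1" by auto
    then show "u n < b" using h[of n] by simp
  qed
  ultimately show "u 0 = 0 \<and> u 1 = i \<and> (\<forall>n\<ge>2. u n < b)" by blast
next
  assume u: "u 0 = 0 \<and> u 1 = i \<and> (\<forall>n\<ge>2. u n < b)"
  have "u n \<in> (if n = 0 then {0} else if n = 1 then {i} else {..<b})" for n
  proof -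
    consider "n = 0" | "n = 1" | "n \<ge> 2" by linarith
    then show ?thesis using u by cases auto
  qed
  then show "u \<in> Sg i" unfolding Sg_def by (auto simp: PiE_iff)
qed

definition "IJ = {(i,j). i < b \<and> j < b \<and> i \<noteq> j}"

lemma IJ_finite: "finite IJ"
proof -
  have "IJ \<subseteq> {..<b} \<times> {..<b}" by (auto simp: IJ_def)
  then show ?thesis by (rule finite_subset) auto
qed

definition "K1 = (\<Union>ij\<in>IJ. Sg (fst ij) \<times> Sg (snd ij))"
definition "KK = (\<Union>ij\<in>IJ. (Sg (fst ij) \<times> Sg (snd ij)) \<times> {0..1::real})"

lemma K1_compact: "compact K1"
  unfolding K1_def using IJ_finite by (intro compact_UN compact_Times Sg_compact) auto

lemma KK_compact: "compact KK"
  unfolding KK_def using IJ_finite by (intro compact_UN compact_Times Sg_compact compact_Icc) auto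

lemma Sg_Sigma: "u \<in> Sg i \<Longrightarrow> i < b \<Longrightarrow> u \<in> SigmaSp b"
proof -
  assume u: "u \<in> Sg i" and i: "i < b"
  then have h: "u 0 = 0" "u 1 = i" "\<forall>n\<ge>2. u n < b" by (auto simp: Sg_mem)
  have "\<forall>n\<ge>1. u n < b"
  proof (intro allI impI)
    fix n :: nat assume "n \<ge> 1"
    then consider "n = 1" | "n \<ge> 2" by linarith
    then show "u n < b" using h i by cases auto
  qed
  then show ?thesis using h by (simp add: SigmaSp_def)
qed


lemma in_K1: "u \<in> SigmaSp b \<Longrightarrow> v \<in> SigmaSp b \<Longrightarrow> u 1 \<noteq> v 1 \<Longrightarrow> (u, v) \<in> K1"
proof -
  assume u: "u \<in> SigmaSp b" and v: "v \<in> SigmaSp b" and uv: "u 1 \<noteq> v 1"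
  have "u \<in> Sg (u 1)" "v \<in> Sg (v 1)" using u v by (auto simp: Sg_mem SigmaSp_def)
  moreover have "(u 1, v 1) \<in> IJ" using u v uv by (auto simp: IJ_def SigmaSp_def)
  ultimately show ?thesis unfolding K1_def by force
qed

lemma K1_props: "(u, v) \<in> K1 \<Longrightarrow> u \<in> SigmaSp b \<and> v \<in> SigmaSp b \<and> u \<noteq> v"
proof -
  assume "(u, v) \<in> K1"
  then obtain i j where ij: "(i,j) \<in> IJ" "u \<in> Sg i" "v \<in> Sg j" unfolding K1_def by force
  then have "i < b" "j < b" "i \<noteq> j" by (auto simp: IJ_def)
  then show ?thesis using ij Sg_Sigma by (auto simp: Sg_mem)
qed

lemma KK_eq: "KK = K1 \<times> {0..1}"
  unfolding KK_def K1_def by auto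

definition "G k p = Yk b lam \<phi> k (fst (fst p)) (snd p) - Yk b lam \<phi> k (snd (fst p)) (snd p)"

lemma G_cont: "continuous_on UNIV (G k)"
proof -
  have c1: "continuous_on UNIV (\<lambda>p::((nat\<Rightarrow>nat)\<times>(nat\<Rightarrow>nat))\<times>real. Yk b lam \<phi> k (fst (fst p)) (snd p))"
    using continuous_on_compose2[OF Yk_cont, of UNIV "\<lambda>p::((nat\<Rightarrow>nat)\<times>(nat\<Rightarrow>nat))\<times>real. (fst (fst p), snd p)"]
    by (simp add: continuous_intros)
  have c2: "continuous_on UNIV (\<lambda>p::((nat\<Rightarrow>nat)\<times>(nat\<Rightarrow>nat))\<times>real. Yk b lam \<phi> k (snd (fst p)) (snd p))"
    using continuous_on_compose2[OF Yk_cont, of UNIV "\<lambda>p::((nat\<Rightarrow>nat)\<times>(nat\<Rightarrow>nat))\<times>real. (snd (fst p), snd p)"]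
    by (simp add: continuous_intros)
  show ?thesis unfolding G_def[abs_def] by (intro continuous_on_diff c1 c2)
qed

lemma open_G: "open {p. c < \<bar>G k p\<bar>}"
  by (intro open_Collect_less continuous_intros G_cont)

lemma part2:
  assumes H: "condH b lam \<phi>"
  shows "\<exists>N. \<forall>p\<in>KK. \<exists>k\<le>N. 1 / real (Suc N) < \<bar>G k p\<bar>"
proof -
  define V where "V N = (\<Union>k\<in>{..N}. {p. 1 / real (Suc N) < \<bar>G k p\<bar>})" for N
  have Vo: "open (V N)" for N unfolding V_def by (intro open_UN ballI open_G)
  have cov: "KK \<subseteq> (\<Union>N\<in>UNIV. V N)"
  proof
    fix p assume p: "p \<in> KK"
    then have "fst p \<in> K1" by (auto simp: KK_eq)
    then have uv: "fst (fst p) \<in> SigmaSp b" "snd (fst p) \<in> SigmaSp b" "fst (fst p) \<noteq> snd (fst p)"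
      using K1_props[of "fst (fst p)" "snd (fst p)"] by auto
    obtain k where k: "G k p \<noteq> 0"
      using nonvanish[OF H uv, of "snd p"] unfolding G_def by blast
    obtain n where n: "n > 0" "inverse (real n) < \<bar>G k p\<bar>"
      using ex_inverse_of_nat_less[of "\<bar>G k p\<bar>"] k by auto
    define N where "N = max k n"
    have "1 / real (Suc N) \<le> inverse (real n)"
      using n by (simp add: N_def divide_simps)
    then have "1 / real (Suc N) < \<bar>G k p\<bar>" using n by linarith
    moreover have "k \<le> N" by (simp add: N_def)
    ultimately have "p \<in> V N" unfolding V_def by auto
    then show "p \<in> (\<Union>N\<in>UNIV. V N)" by blast
  qed
  obtain C' where C': "C' \<subseteq> UNIV" "finite C'" "KK \<subseteq> (\<Union>N\<in>C'. V N)"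
    using compactE_image[OF KK_compact, of UNIV V] Vo cov by blast
  define N0 where "N0 = Max (insert 0 C')"
  have mono: "V N \<subseteq> V N0" if "N \<in> C'" for N
  proof -
    have NN: "N \<le> N0" unfolding N0_def using that C'(2) by simp
    have "1 / real (Suc N0) \<le> 1 / real (Suc N)" using NN by (simp add: divide_simps)
    note le = this
    show ?thesis unfolding V_def
    proof (intro subsetI)
      fix p assume "p \<in> (\<Union>k\<in>{..N}. {p. 1 / real (Suc N) < \<bar>G k p\<bar>})"
      then obtain k where k: "k \<le> N" "1 / real (Suc N) < \<bar>G k p\<bar>" by blast
      then have "k \<in> {..N0}" "p \<in> {p. 1 / real (Suc N0) < \<bar>G k p\<bar>}" using NN le by auto
      then show "p \<in> (\<Union>k\<in>{..N0}. {p. 1 / real (Suc N0) < \<bar>G k p\<bar>})" by blast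
    qed
  qed
  have "KK \<subseteq> V N0" using C'(3) mono by blast
  then show ?thesis unfolding V_def by blast
qed

lemma zero_open:
  assumes z: "\<forall>x\<in>{0<..<1::real}. Yk b lam \<phi> 0 u x - Yk b lam \<phi> 0 v x = 0"
  shows "\<forall>x\<in>{0<..<1::real}. Yk b lam \<phi> k u x - Yk b lam \<phi> k v x = 0"
proof (induction k)
  case 0 then show ?case using z by simp
next
  case (Suc k)
  show ?case
  proof
    fix x :: real assume x: "x \<in> {0<..<1}"
    have d0: "((\<lambda>y. Yk b lam \<phi> k u y - Yk b lam \<phi> k v y) has_real_derivative 0) (at x)"
      by (rule has_field_derivative_transform_within_open[OF DERIV_const[of "0::real" "at x"], of "{0<..<1}"])
         (use x Suc in auto)
    have d1: "((\<lambda>y. Yk b lam \<phi> k u y - Yk b lam \<phi> k v y) has_real_derivative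
        Yk b lam \<phi> (Suc k) u x - Yk b lam \<phi> (Suc k) v x) (at x)"
      by (rule DERIV_diff) (rule Yder)+
    show "Yk b lam \<phi> (Suc k) u x - Yk b lam \<phi> (Suc k) v x = 0"
      using DERIV_unique[OF d1 d0] .
  qed
qed

lemma part1:
  assumes H: "condH b lam \<phi>"
  shows "\<exists>N. \<forall>q\<in>K1. \<exists>x\<in>{0<..<1}. 1 / real (Suc N) < \<bar>G 0 (q, x)\<bar>"
proof -
  define W where "W N = fst ` ({p. 1 / real (Suc N) < \<bar>G 0 p\<bar>} \<inter> {p. 0 < snd p} \<inter> {p. snd p < 1})" for N
  have Wo: "open (W N)" for N
    unfolding W_def by (intro open_image_fst open_Int open_G open_Collect_less continuous_intros)
  have cov: "K1 \<subseteq> (\<Union>N\<in>UNIV. W N)"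
  proof
    fix q assume q: "q \<in> K1"
    then have uv: "fst q \<in> SigmaSp b" "snd q \<in> SigmaSp b" "fst q \<noteq> snd q"
      using K1_props[of "fst q" "snd q"] by auto
    have "\<exists>x\<in>{0<..<1::real}. G 0 (q, x) \<noteq> 0"
    proof (rule ccontr)
      assume "\<not> ?thesis"
      then have "\<forall>x\<in>{0<..<1::real}. Yk b lam \<phi> 0 (fst q) x - Yk b lam \<phi> 0 (snd q) x = 0"
        by (simp add: G_def)
      from zero_open[OF this] have "\<And>k. Yk b lam \<phi> k (fst q) (1/2) - Yk b lam \<phi> k (snd q) (1/2) = 0"
        by simp
      then show False using nonvanish[OF H uv, of "1/2"] by blast
    qed
    then obtain x where x: "x \<in> {0<..<1::real}" "G 0 (q, x) \<noteq> 0" by blast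
    obtain n where n: "n > 0" "inverse (real n) < \<bar>G 0 (q, x)\<bar>"
      using ex_inverse_of_nat_less[of "\<bar>G 0 (q, x)\<bar>"] x by auto
    have "1 / real (Suc n) \<le> inverse (real n)"
      using n by (simp add: divide_simps)
    then have "1 / real (Suc n) < \<bar>G 0 (q, x)\<bar>" using n by linarith
    then have "(q, x) \<in> {p. 1 / real (Suc n) < \<bar>G 0 p\<bar>} \<inter> {p. 0 < snd p} \<inter> {p. snd p < 1}"
      using x by auto
    then have "q \<in> W n" unfolding W_def by force
    then show "q \<in> (\<Union>N\<in>UNIV. W N)" by blast
  qed
  obtain C' where C': "C' \<subseteq> UNIV" "finite C'" "K1 \<subseteq> (\<Union>N\<in>C'. W N)"
    using compactE_image[OF K1_compact, of UNIV W] Wo cov by blast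
  define N0 where "N0 = Max (insert 0 C')"
  have mono: "W N \<subseteq> W N0" if "N \<in> C'" for N
  proof -
    have NN: "N \<le> N0" unfolding N0_def using that C'(2) by simp
    have "1 / real (Suc N0) \<le> 1 / real (Suc N)" using NN by (simp add: divide_simps)
    then have "{p. 1 / real (Suc N) < \<bar>G 0 p\<bar>} \<subseteq> {p. 1 / real (Suc N0) < \<bar>G 0 p\<bar>}" by auto
    then show ?thesis unfolding W_def by (intro image_mono Int_mono) auto

  qed
  have sub: "K1 \<subseteq> W N0" using C'(3) mono by blast
  show ?thesis
  proof (intro exI[of _ N0] ballI)
    fix q assume "q \<in> K1"
    then have "q \<in> W N0" using sub by blast
    then obtain p where "p \<in> {p. 1 / real (Suc N0) < \<bar>G 0 p\<bar>} \<inter> {p. 0 < snd p} \<inter> {p. snd p < 1}" "q = fst p"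
      unfolding W_def by blast
    then show "\<exists>x\<in>{0<..<1}. 1 / real (Suc N0) < \<bar>G 0 (q, x)\<bar>"
      by (intro bexI[of _ "snd p"]) auto
  qed
qed

end


theorem mainTheorem16:
  fixes b :: nat and lam :: real and \<phi> :: "real \<Rightarrow> real"
  assumes "b \<ge> 2"
    and "1 / real b < lam" and "lam < 1"
    and "real_analytic \<phi>"
    and "\<And>x. \<phi> (x + 1) = \<phi> x"
    and "condH b lam \<phi>"
  shows "\<exists>\<epsilon>1>0. \<exists>Q1::nat. Q1 > 0 \<and>
           (\<forall>f\<in>Fset b lam \<phi> 1.
              (SUP x\<in>{0..1}. \<bar>deriv f x\<bar>) \<ge> \<epsilon>1 \<and>
              (\<forall>x\<in>{0..1::real}. \<exists>k\<in>{1..Q1}. \<bar>(deriv ^^ k) f x\<bar> \<ge> \<epsilon>1))"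
proof -
  obtain C L where CL: "C \<ge> 0" "L > 0" "\<And>k x. \<bar>(deriv^^k) \<phi> x\<bar> \<le> C * fact k * L^k"
    using global_bound[OF assms(4) assms(5)] by blast
  interpret ysetup b lam \<phi> C L
    by unfold_locales (use assms CL in auto)
  obtain N0 where N0: "\<forall>p\<in>KK. \<exists>k\<le>N0. 1 / real (Suc N0) < \<bar>G k p\<bar>"
    using part2[OF assms(6)] by blast
  obtain N1 where N1: "\<forall>q\<in>K1. \<exists>x\<in>{0<..<1}. 1 / real (Suc N1) < \<bar>G 0 (q, x)\<bar>"
    using part1[OF assms(6)] by blast
  define \<epsilon> where "\<epsilon> = min (1 / real (Suc N0)) (1 / real (Suc N1))"
  have \<epsilon>0: "\<epsilon> > 0" by (simp add: \<epsilon>_def)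
  have main: "(SUP x\<in>{0..1}. \<bar>deriv f x\<bar>) \<ge> \<epsilon> \<and>
              (\<forall>x\<in>{0..1::real}. \<exists>k\<in>{1..Suc N0}. \<bar>(deriv ^^ k) f x\<bar> \<ge> \<epsilon>)"
    if fF: "f \<in> Fset b lam \<phi> 1" for f
  proof -
    obtain u v where f: "f = (\<lambda>x. Gammafun b lam \<phi> u x - Gammafun b lam \<phi> v x)"
      and u: "u \<in> SigmaSp b" and v: "v \<in> SigmaSp b" and uv: "u 1 \<noteq> v 1"
      using fF unfolding Fset_def by blast
    have gd: "(Gammafun b lam \<phi> w has_real_derivative Yk b lam \<phi> 0 w x) (at x)" for w x
    proof -
      have cY: "continuous_on UNIV (Yk b lam \<phi> 0 w)"
        by (intro continuous_at_imp_continuous_on ballI DERIV_isCont[OF Yder])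
      have cont: "continuous_on UNIV (\<lambda>t. Yfun b lam \<phi> t w)"
        using cY by (simp add: Yk0[symmetric])
      have "Gammafun b lam \<phi> w = (\<lambda>x. if 0 \<le> x then integral {0..x} (\<lambda>t. Yfun b lam \<phi> t w)
          else - integral {x..0} (\<lambda>t. Yfun b lam \<phi> t w))"
        by (rule ext) (simp add: Gammafun_def)
      then show ?thesis using gamma_deriv[OF cont, of x] by (simp add: Yk0)
    qed
    have df: "deriv f = (\<lambda>x. Yk b lam \<phi> 0 u x - Yk b lam \<phi> 0 v x)"
      unfolding f by (rule ext, rule DERIV_imp_deriv, rule DERIV_diff) (rule gd)+
    have dfk: "(deriv^^Suc k) f = (\<lambda>x. Yk b lam \<phi> k u x - Yk b lam \<phi> k v x)" for k
      by (simp only: funpow_Suc_right comp_apply df Yk_funpow)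
    have uvK1: "(u, v) \<in> K1" by (rule in_K1[OF u v uv])
    have bnd: "\<bar>deriv f y\<bar> \<le> 2 * C'" for y
    proof -
      have "\<bar>deriv f y\<bar> \<le> \<bar>Yk b lam \<phi> 0 u y\<bar> + \<bar>Yk b lam \<phi> 0 v y\<bar>" by (simp add: df)
      also have "\<dots> \<le> C' + C'" using Ybound[of 0 u y] Ybound[of 0 v y] by simp
      finally show ?thesis by simp
    qed
    have part_a: "(SUP x\<in>{0..1}. \<bar>deriv f x\<bar>) \<ge> \<epsilon>"
    proof -
      obtain x where x: "x \<in> {0<..<1::real}" "1 / real (Suc N1) < \<bar>G 0 ((u, v), x)\<bar>"
        using N1 uvK1 by blast
      have bdd: "bdd_above ((\<lambda>x. \<bar>deriv f x\<bar>) ` {0..1})"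
        by (rule bdd_aboveI2[where M = "2 * C'"]) (rule bnd)
      have "\<epsilon> \<le> \<bar>deriv f x\<bar>" using x by (simp add: df G_def \<epsilon>_def)
      then show ?thesis by (rule cSUP_upper2[OF bdd, rotated]) (use x in auto)
    qed
    have part_b: "\<forall>x\<in>{0..1::real}. \<exists>k\<in>{1..Suc N0}. \<bar>(deriv ^^ k) f x\<bar> \<ge> \<epsilon>"
    proof
      fix x :: real assume x: "x \<in> {0..1}"
      have "((u, v), x) \<in> KK" using uvK1 x by (simp add: KK_eq)
      then obtain k where k: "k \<le> N0" "1 / real (Suc N0) < \<bar>G k ((u, v), x)\<bar>" using N0 by blast
      have e: "(deriv ^^ Suc k) f x = Yk b lam \<phi> k u x - Yk b lam \<phi> k v x" by (simp only: dfk)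
      have "\<epsilon> \<le> \<bar>(deriv ^^ Suc k) f x\<bar>" unfolding e using k by (simp add: G_def \<epsilon>_def)

      moreover have "Suc k \<in> {1..Suc N0}" using k by simp
      ultimately show "\<exists>k\<in>{1..Suc N0}. \<bar>(deriv ^^ k) f x\<bar> \<ge> \<epsilon>" by blast
    qed
    show ?thesis using part_a part_b by blast
  qed
  have "Suc N0 > 0" by simp
  then show ?thesis using \<epsilon>0 main by blast
qed

end
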